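(* For a countable $L$-structure $\mathbb X$ the following are equivalent: (a) $\mathbb X$ is weakly reversible; (b) for every countable $L$-structure $\mathbb Y$, $\mathbb X\equiv_{\mathcal P_{\infty\omega}}\mathbb Y$ implies $\mathbb Y\cong\mathbb X$; (c) the theory $\mathrm{Th}_{\mathcal P_{\infty\omega}\cup\mathcal N_{\infty\omega}}(\mathbb X)$ of all sentences of $\mathcal P_{\infty\omega}\cup\mathcal N_{\infty\omega}$ true in $\mathbb X$ is $\omega$-categorical, i.e. every countable $L$-structure satisfying all these sentences is isomorphic to $\mathbb X$.
   Context: $L=\langle R_i:i\in I\rangle$ is a relational language, $R_i$ of arity $n_i$. A condensation from $\mathbb X$ onto $\mathbb Y$ is a bijection $F:X\to Y$ such that for all $i\in I$ and $\bar x\in X^{n_i}$, $\bar x\in R_i^{\mathbb X}$ implies $F\bar x\in R_i^{\mathbb Y}$ (where $F\bar x$ is coordinatewise). $\mathbb X\sim_c\mathbb Y$ means there are condensations from $\mathbb X$ onto $\mathbb Y$ and from $\mathbb Y$ onto $\mathbb X$. $\mathbb X$ is weakly reversible iff for every $L$-structure $\mathbb Y$, $\mathbb Y\sim_c\mathbb X$ implies $\mathbb Y\cong\mathbb X$. Formula classes: $\mathcal P_0$ consists of all atomic formulas ($v_\alpha=v_\beta$, $R_i(v_{\alpha_1},\dots,v_{\alpha_{n_i}})$) and all $\neg\,v_\alpha=v_\beta$. $\mathcal N_0$ consists of all $\neg R_i(v_{\alpha_1},\dots,v_{\alpha_{n_i}})$, all $v_\alpha=v_\beta$ and all $\neg\,v_\alpha=v_\beta$.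 $\mathcal P_{\infty\omega}$ (resp. $\mathcal N_{\infty\omega}$) is the closure of $\mathcal P_0$ (resp. $\mathcal N_0$) under $\forall v$, $\exists v$ and conjunctions and disjunctions of arbitrary sets of formulas (no negation). For a class $\mathcal F$ of formulas, $\mathbb X\equiv_{\mathcal F}\mathbb Y$ means $\mathbb X$ and $\mathbb Y$ satisfy the same sentences of $\mathcal F$. *)

theory Defs
  imports Main "HOL-Library.Countable_Set"
begin

text \<open>A relational language is given by an index type 'i together with an arity
function ar.\<close>

record ('i, 'a) lstruct =
  univ :: "'a set"
  rels :: "'i \<Rightarrow> 'a list set"

definition is_struct :: "('i \<Rightarrow> nat) \<Rightarrow> ('i, 'a) lstruct \<Rightarrow> bool" where
  "is_struct ar M \<longleftrightarrow> univ M \<noteq> {} \<and>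
     (\<forall>i. \<forall>xs \<in> rels M i. length xs = ar i \<and> set xs \<subseteq> univ M)"

definition condensation :: "('i, 'a) lstruct \<Rightarrow> ('i, 'b) lstruct \<Rightarrow> ('a \<Rightarrow> 'b) \<Rightarrow> bool" where
  "condensation X Y F \<longleftrightarrow> bij_betw F (univ X) (univ Y) \<and>
     (\<forall>i. \<forall>xs \<in> rels X i. map F xs \<in> rels Y i)"

definition cond_equiv :: "('i, 'a) lstruct \<Rightarrow> ('i, 'b) lstruct \<Rightarrow> bool" where
  "cond_equiv X Y \<longleftrightarrow> (\<exists>F. condensation X Y F) \<and> (\<exists>G. condensation Y X G)"

definition isomorphism :: "('i \<Rightarrow> nat) \<Rightarrow> ('i, 'a) lstruct \<Rightarrow> ('i, 'b) lstruct \<Rightarrow> ('a \<Rightarrow> 'b) \<Rightarrow> bool" where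
  "isomorphism ar X Y F \<longleftrightarrow> bij_betw F (univ X) (univ Y) \<and>
     (\<forall>i xs. length xs = ar i \<and> set xs \<subseteq> univ X \<longrightarrow>
        (xs \<in> rels X i \<longleftrightarrow> map F xs \<in> rels Y i))"

definition isomorphic :: "('i \<Rightarrow> nat) \<Rightarrow> ('i, 'a) lstruct \<Rightarrow> ('i, 'b) lstruct \<Rightarrow> bool" where
  "isomorphic ar X Y \<longleftrightarrow> (\<exists>F. isomorphism ar X Y F)"

text \<open>Weak reversibility. The structures Y range over structures on the same carrier
type as X; since Y \<sim>c X forces a bijection between the universes, this loses nothing.\<close>
definition weakly_reversible :: "('i \<Rightarrow> nat) \<Rightarrow> ('i, 'a) lstruct \<Rightarrow> bool" where
  "weakly_reversible ar X \<longleftrightarrow>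
     (\<forall>Y :: ('i, 'a) lstruct. is_struct ar Y \<and> cond_equiv Y X \<longrightarrow> isomorphic ar Y X)"

text \<open>Infinitary formulas are represented semantically: a formula is its meaning,
a function of a structure and an assignment of elements to the variables v_n (n :: nat).\<close>
type_synonym ('i, 'a) fsem = "('i, 'a) lstruct \<Rightarrow> (nat \<Rightarrow> 'a) \<Rightarrow> bool"

inductive_set Pinf :: "('i \<Rightarrow> nat) \<Rightarrow> ('i, 'a) fsem set" for ar where
  P_eq:   "(\<lambda>M s. s a = s b) \<in> Pinf ar"
| P_neq:  "(\<lambda>M s. s a \<noteq> s b) \<in> Pinf ar"
| P_rel:  "length vs = ar i \<Longrightarrow> (\<lambda>M s. map s vs \<in> rels M i) \<in> Pinf ar"
| P_all:  "\<phi> \<in> Pinf ar \<Longrightarrow> (\<lambda>M s. \<forall>x \<in> univ M. \<phi> M (s(v := x))) \<in> Pinf ar"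
| P_ex:   "\<phi> \<in> Pinf ar \<Longrightarrow> (\<lambda>M s. \<exists>x \<in> univ M. \<phi> M (s(v := x))) \<in> Pinf ar"
| P_conj: "(\<forall>\<psi> \<in> S. \<psi> \<in> Pinf ar) \<Longrightarrow> (\<lambda>M s. \<forall>\<phi> \<in> S. \<phi> M s) \<in> Pinf ar"
| P_disj: "(\<forall>\<psi> \<in> S. \<psi> \<in> Pinf ar) \<Longrightarrow> (\<lambda>M s. \<exists>\<phi> \<in> S. \<phi> M s) \<in> Pinf ar"

inductive_set Ninf :: "('i \<Rightarrow> nat) \<Rightarrow> ('i, 'a) fsem set" for ar where
  N_eq:   "(\<lambda>M s. s a = s b) \<in> Ninf ar"
| N_neq:  "(\<lambda>M s. s a \<noteq> s b) \<in> Ninf ar"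
| N_nrel: "length vs = ar i \<Longrightarrow> (\<lambda>M s. map s vs \<notin> rels M i) \<in> Ninf ar"
| N_all:  "\<phi> \<in> Ninf ar \<Longrightarrow> (\<lambda>M s. \<forall>x \<in> univ M. \<phi> M (s(v := x))) \<in> Ninf ar"
| N_ex:   "\<phi> \<in> Ninf ar \<Longrightarrow> (\<lambda>M s. \<exists>x \<in> univ M. \<phi> M (s(v := x))) \<in> Ninf ar"
| N_conj: "(\<forall>\<psi> \<in> S. \<psi> \<in> Ninf ar) \<Longrightarrow> (\<lambda>M s. \<forall>\<phi> \<in> S. \<phi> M s) \<in> Ninf ar"
| N_disj: "(\<forall>\<psi> \<in> S. \<psi> \<in> Ninf ar) \<Longrightarrow> (\<lambda>M s. \<exists>\<phi> \<in> S. \<phi> M s) \<in> Ninf ar"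

definition asg :: "('i, 'a) lstruct \<Rightarrow> (nat \<Rightarrow> 'a) \<Rightarrow> bool" where
  "asg M s \<longleftrightarrow> range s \<subseteq> univ M"

text \<open>A sentence: a formula whose truth value in every structure does not depend on
the assignment (semantically: no free variables).\<close>
definition sentence :: "('i \<Rightarrow> nat) \<Rightarrow> ('i, 'a) fsem \<Rightarrow> bool" where
  "sentence ar \<phi> \<longleftrightarrow> (\<forall>M s s'. is_struct ar M \<and> asg M s \<and> asg M s' \<longrightarrow> (\<phi> M s \<longleftrightarrow> \<phi> M s'))"

definition sat :: "('i, 'a) lstruct \<Rightarrow> ('i, 'a) fsem \<Rightarrow> bool" where
  "sat M \<phi> \<longleftrightarrow> (\<forall>s. asg M s \<longrightarrow> \<phi> M s)"

definition equiv_in :: "('i \<Rightarrow> nat) \<Rightarrow> ('i, 'a) fsem set \<Rightarrow> ('i, 'a) lstruct \<Rightarrow> ('i, 'a) lstruct \<Rightarrow> bool" where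
  "equiv_in ar F X Y \<longleftrightarrow> (\<forall>\<phi> \<in> F. sentence ar \<phi> \<longrightarrow> (sat X \<phi> \<longleftrightarrow> sat Y \<phi>))"

definition Th :: "('i \<Rightarrow> nat) \<Rightarrow> ('i, 'a) fsem set \<Rightarrow> ('i, 'a) lstruct \<Rightarrow> ('i, 'a) fsem set" where
  "Th ar F X = {\<phi> \<in> F. sentence ar \<phi> \<and> sat X \<phi>}"

end

theory Submission
  imports Defs
begin

lemma asg_upd: "asg M s \<Longrightarrow> x \<in> univ M \<Longrightarrow> asg M (s(n:=x))"
  by (auto simp: asg_def)

lemma asg_in: "asg M s \<Longrightarrow> s k \<in> univ M"
  by (auto simp: asg_def)

lemma map_idI': "(\<And>x. x \<in> set xs \<Longrightarrow> f (g x) = x) \<Longrightarrow> map f (map g xs) = xs"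
  by (induction xs) auto

definition dep :: "('i \<Rightarrow> nat) \<Rightarrow> nat \<Rightarrow> ('i, 'a) fsem \<Rightarrow> bool" where
  "dep ar n \<phi> \<longleftrightarrow> (\<forall>M s s'. is_struct ar M \<and> asg M s \<and> asg M s' \<and> (\<forall>k<n. s k = s' k)
      \<longrightarrow> (\<phi> M s \<longleftrightarrow> \<phi> M s'))"

lemma dep0: "dep ar 0 \<phi> = sentence ar \<phi>"
  by (simp add: dep_def sentence_def)

lemma dep_conj: fixes S :: "('i, 'a) fsem set" and ar :: "'i \<Rightarrow> nat" assumes a: "\<forall>\<phi>\<in>S. dep ar n \<phi>" shows "dep ar n (\<lambda>M u. \<forall>\<phi>\<in>S. \<phi> M u)"
  unfolding dep_def
proof (intro allI impI)
  fix M :: "('i, 'a) lstruct" and s s' :: "nat \<Rightarrow> 'a" assume h: "is_struct ar M \<and> asg M s \<and> asg M s' \<and> (\<forall>k<n. s k = s' k)"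
  have e: "\<phi> M s = \<phi> M s'" if "\<phi> \<in> S" for \<phi>
  proof -
    have "dep ar n \<phi>" using a that by (rule bspec)
    hence "\<forall>(M::('i, 'a) lstruct) s s'. is_struct ar M \<and> asg M s \<and> asg M s' \<and> (\<forall>k<n. s k = s' k) \<longrightarrow> (\<phi> M s \<longleftrightarrow> \<phi> M s')"
      unfolding dep_def .
    from this[rule_format, of M s s'] h show ?thesis by blast
  qed
  show "(\<forall>\<phi>\<in>S. \<phi> M s) = (\<forall>\<phi>\<in>S. \<phi> M s')" by (rule ball_cong[OF refl], rule e)
qed

lemma dep_disj: fixes S :: "('i, 'a) fsem set" and ar :: "'i \<Rightarrow> nat" assumes a: "\<forall>\<phi>\<in>S. dep ar n \<phi>" shows "dep ar n (\<lambda>M u. \<exists>\<phi>\<in>S. \<phi> M u)"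
  unfolding dep_def
proof (intro allI impI)
  fix M :: "('i, 'a) lstruct" and s s' :: "nat \<Rightarrow> 'a" assume h: "is_struct ar M \<and> asg M s \<and> asg M s' \<and> (\<forall>k<n. s k = s' k)"
  have e: "\<phi> M s = \<phi> M s'" if "\<phi> \<in> S" for \<phi>
  proof -
    have "dep ar n \<phi>" using a that by (rule bspec)
    hence "\<forall>(M::('i, 'a) lstruct) s s'. is_struct ar M \<and> asg M s \<and> asg M s' \<and> (\<forall>k<n. s k = s' k) \<longrightarrow> (\<phi> M s \<longleftrightarrow> \<phi> M s')"
      unfolding dep_def .
    from this[rule_format, of M s s'] h show ?thesis by blast
  qed
  show "(\<exists>\<phi>\<in>S. \<phi> M s) = (\<exists>\<phi>\<in>S. \<phi> M s')" by (rule bex_cong[OF refl], rule e)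
qed

lemma dep_ex: fixes \<phi> :: "('i, 'a) fsem" and ar :: "'i \<Rightarrow> nat" shows "dep ar (Suc n) \<phi> \<Longrightarrow> dep ar n (\<lambda>M u. \<exists>x\<in>univ M. \<phi> M (u(n:=x)))"
  unfolding dep_def
proof (intro allI impI)
  fix M :: "('i, 'a) lstruct" and s s' :: "nat \<Rightarrow> 'a"
  assume d: "\<forall>M s s'. is_struct ar M \<and> asg M s \<and> asg M s' \<and> (\<forall>k<Suc n. s k = s' k) \<longrightarrow> \<phi> M s = \<phi> M s'"
    and h: "is_struct ar M \<and> asg M s \<and> asg M s' \<and> (\<forall>k<n. s k = s' k)"
  have "\<phi> M (s(n:=x)) = \<phi> M (s'(n:=x))" if x: "x \<in> univ M" for x
  proof -
    have a1: "asg M (s(n:=x))" "asg M (s'(n:=x))"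
      using asg_upd[of M s x n] asg_upd[of M s' x n] h x by auto
    have a2: "\<forall>k<Suc n. (s(n:=x)) k = (s'(n:=x)) k" using h by (auto simp: less_Suc_eq)
    have "is_struct ar M \<and> asg M (s(n:=x)) \<and> asg M (s'(n:=x)) \<and> (\<forall>k<Suc n. (s(n:=x)) k = (s'(n:=x)) k)"
      using a1 a2 h by simp
    then show ?thesis by (rule d[rule_format])
  qed
  then show "(\<exists>x\<in>univ M. \<phi> M (s(n := x))) = (\<exists>x\<in>univ M. \<phi> M (s'(n := x)))" by (rule bex_cong[OF refl])
qed

lemma dep_all: fixes \<phi> :: "('i, 'a) fsem" and ar :: "'i \<Rightarrow> nat" shows "dep ar (Suc n) \<phi> \<Longrightarrow> dep ar n (\<lambda>M u. \<forall>x\<in>univ M. \<phi> M (u(n:=x)))"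
  unfolding dep_def
proof (intro allI impI)
  fix M :: "('i, 'a) lstruct" and s s' :: "nat \<Rightarrow> 'a"
  assume d: "\<forall>M s s'. is_struct ar M \<and> asg M s \<and> asg M s' \<and> (\<forall>k<Suc n. s k = s' k) \<longrightarrow> \<phi> M s = \<phi> M s'"
    and h: "is_struct ar M \<and> asg M s \<and> asg M s' \<and> (\<forall>k<n. s k = s' k)"
  have "\<phi> M (s(n:=x)) = \<phi> M (s'(n:=x))" if x: "x \<in> univ M" for x
  proof -
    have a1: "asg M (s(n:=x))" "asg M (s'(n:=x))"
      using asg_upd[of M s x n] asg_upd[of M s' x n] h x by auto
    have a2: "\<forall>k<Suc n. (s(n:=x)) k = (s'(n:=x)) k" using h by (auto simp: less_Suc_eq)
    have "is_struct ar M \<and> asg M (s(n:=x)) \<and> asg M (s'(n:=x)) \<and> (\<forall>k<Suc n. (s(n:=x)) k = (s'(n:=x)) k)"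
      using a1 a2 h by simp
    then show ?thesis by (rule d[rule_format])
  qed
  then show "(\<forall>x\<in>univ M. \<phi> M (s(n := x))) = (\<forall>x\<in>univ M. \<phi> M (s'(n := x)))" by (rule ball_cong[OF refl])
qed

locale bf =
  fixes ar :: "'i \<Rightarrow> nat" and C :: "('i, 'a) fsem set"
    and P :: "('i, 'a) lstruct \<Rightarrow> 'i \<Rightarrow> 'a list \<Rightarrow> bool"
    and X Y :: "('i, 'a) lstruct"
  assumes eqC: "\<And>a b. (\<lambda>M s. s a = s b) \<in> C"
    and neqC: "\<And>a b. (\<lambda>M s. s a \<noteq> s b) \<in> C"
    and atC: "\<And>i vs. length vs = ar i \<Longrightarrow> (\<lambda>M s. P M i (map s vs)) \<in> C"
    and allC: "\<And>\<phi> v. \<phi> \<in> C \<Longrightarrow> (\<lambda>M s. \<forall>x\<in>univ M. \<phi> M (s(v:=x))) \<in> C"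
    and exC: "\<And>\<phi> v. \<phi> \<in> C \<Longrightarrow> (\<lambda>M s. \<exists>x\<in>univ M. \<phi> M (s(v:=x))) \<in> C"
    and conjC: "\<And>S. S \<subseteq> C \<Longrightarrow> (\<lambda>M s. \<forall>\<phi>\<in>S. \<phi> M s) \<in> C"
    and disjC: "\<And>S. S \<subseteq> C \<Longrightarrow> (\<lambda>M s. \<exists>\<phi>\<in>S. \<phi> M s) \<in> C"
    and sX: "is_struct ar X" and sY: "is_struct ar Y"
    and cX: "countable (univ X)" and cY: "countable (univ Y)"
    and tr: "\<And>\<phi>. \<phi> \<in> C \<Longrightarrow> sentence ar \<phi> \<Longrightarrow> sat X \<phi> \<Longrightarrow> sat Y \<phi>"
begin

definition R :: "nat \<Rightarrow> (nat \<Rightarrow> 'a) \<Rightarrow> (nat \<Rightarrow> 'a) \<Rightarrow> bool" where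
  "R n s t \<longleftrightarrow> asg X s \<and> asg Y t \<and> (\<forall>\<phi>\<in>C. dep ar n \<phi> \<longrightarrow> \<phi> X s \<longrightarrow> \<phi> Y t)"

lemma R0: assumes "asg X s" "asg Y t" shows "R 0 s t"
  unfolding R_def
proof (intro conjI assms ballI impI)
  fix \<phi> assume "\<phi> \<in> C" "dep ar 0 \<phi>" "\<phi> X s"
  hence sen: "sentence ar \<phi>" by (simp add: dep0)
  have "sat X \<phi>" unfolding sat_def
    using sen \<open>\<phi> X s\<close> assms sX unfolding sentence_def by blast
  hence "sat Y \<phi>" using tr \<open>\<phi> \<in> C\<close> sen by blast
  thus "\<phi> Y t" using assms unfolding sat_def by blast
qed

lemma R_asgX: "R n s t \<Longrightarrow> asg X s" by (simp add: R_def)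
lemma R_asgY: "R n s t \<Longrightarrow> asg Y t" by (simp add: R_def)
lemma R_mono: assumes "R n s t" "\<phi> \<in> C" "dep ar n \<phi>" "\<phi> X s" shows "\<phi> Y t"
proof -
  have "\<forall>\<phi>\<in>C. dep ar n \<phi> \<longrightarrow> \<phi> X s \<longrightarrow> \<phi> Y t" using assms(1) unfolding R_def by (rule conjunct2[OF conjunct2])
  from bspec[OF this assms(2)] assms(3,4) show ?thesis by simp
qed
lemma R_fail:
  assumes "\<not> R n s t" "asg X s" "asg Y t"
  shows "\<exists>\<phi>. \<phi> \<in> C \<and> dep ar n \<phi> \<and> \<phi> X s \<and> \<not> \<phi> Y t"
proof (rule ccontr)
  assume "\<not> ?thesis"
  hence "\<forall>\<phi>\<in>C. dep ar n \<phi> \<longrightarrow> \<phi> X s \<longrightarrow> \<phi> Y t" by blast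
  hence "R n s t" using assms(2,3) by (simp add: R_def)
  thus False using assms(1) by contradiction
qed

lemma forth_step:
  assumes r: "R n s t" and a: "a \<in> univ X"
  shows "\<exists>b\<in>univ Y. R (Suc n) (s(n:=a)) (t(n:=b))"
proof (rule ccontr)
  assume nb: "\<not> ?thesis"
  have ax: "asg X (s(n:=a))" using asg_upd[OF R_asgX[OF r] a] .
  have "\<forall>b\<in>univ Y. \<exists>\<phi>. \<phi> \<in> C \<and> dep ar (Suc n) \<phi> \<and> \<phi> X (s(n:=a)) \<and> \<not> \<phi> Y (t(n:=b))"
  proof
    fix b assume b: "b \<in> univ Y"
    have ay: "asg Y (t(n:=b))" using asg_upd[OF R_asgY[OF r] b] .
    have "\<not> R (Suc n) (s(n:=a)) (t(n:=b))" using nb b by auto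
    thus "\<exists>\<phi>. \<phi> \<in> C \<and> dep ar (Suc n) \<phi> \<and> \<phi> X (s(n:=a)) \<and> \<not> \<phi> Y (t(n:=b))"
      using R_fail ax ay by simp
  qed
  from bchoice[OF this] obtain f where f: "\<forall>b\<in>univ Y. f b \<in> C \<and> dep ar (Suc n) (f b) \<and> f b X (s(n:=a)) \<and> \<not> f b Y (t(n:=b))"
    by (elim exE)
  define S where "S = f ` univ Y"
  define \<psi> where "\<psi> = (\<lambda>M u. \<forall>\<phi>\<in>S. \<phi> M u)"
  define \<chi> where "\<chi> = (\<lambda>M u. \<exists>x\<in>univ M. \<psi> M (u(n:=x)))"
  have SC: "S \<subseteq> C" using f unfolding S_def by auto
  have "\<chi> \<in> C" unfolding \<chi>_def \<psi>_def by (rule exC, rule conjC, rule SC)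
  moreover have "dep ar n \<chi>" unfolding \<chi>_def \<psi>_def
    by (rule dep_ex, rule dep_conj, use f in \<open>auto simp: S_def\<close>)
  moreover have "\<chi> X s"
  proof -
    have "\<psi> X (s(n:=a))" unfolding \<psi>_def S_def using f by auto
    thus ?thesis unfolding \<chi>_def using a by auto
  qed
  ultimately have "\<chi> Y t" by (rule R_mono[OF r])
  then obtain b where b: "b \<in> univ Y" and "\<psi> Y (t(n:=b))" unfolding \<chi>_def by auto
  hence "f b Y (t(n:=b))" unfolding \<psi>_def S_def by auto
  thus False using f b by auto
qed

lemma back_step:
  assumes r: "R n s t" and b: "b \<in> univ Y"
  shows "\<exists>a\<in>univ X. R (Suc n) (s(n:=a)) (t(n:=b))"
proof (rule ccontr)
  assume na: "\<not> ?thesis"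
  have ay: "asg Y (t(n:=b))" using asg_upd[OF R_asgY[OF r] b] .
  have "\<forall>a\<in>univ X. \<exists>\<phi>. \<phi> \<in> C \<and> dep ar (Suc n) \<phi> \<and> \<phi> X (s(n:=a)) \<and> \<not> \<phi> Y (t(n:=b))"
  proof
    fix a assume a: "a \<in> univ X"
    have ax: "asg X (s(n:=a))" using asg_upd[OF R_asgX[OF r] a] .
    have "\<not> R (Suc n) (s(n:=a)) (t(n:=b))" using na a by auto
    thus "\<exists>\<phi>. \<phi> \<in> C \<and> dep ar (Suc n) \<phi> \<and> \<phi> X (s(n:=a)) \<and> \<not> \<phi> Y (t(n:=b))"
      using R_fail ax ay by simp
  qed
  from bchoice[OF this] obtain f where f: "\<forall>a\<in>univ X. f a \<in> C \<and> dep ar (Suc n) (f a) \<and> f a X (s(n:=a)) \<and> \<not> f a Y (t(n:=b))"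
    by (elim exE)
  define S where "S = f ` univ X"
  define \<psi> where "\<psi> = (\<lambda>M u. \<exists>\<phi>\<in>S. \<phi> M u)"
  define \<chi> where "\<chi> = (\<lambda>M u. \<forall>x\<in>univ M. \<psi> M (u(n:=x)))"
  have SC: "S \<subseteq> C" using f unfolding S_def by auto
  have "\<chi> \<in> C" unfolding \<chi>_def \<psi>_def by (rule allC, rule disjC, rule SC)
  moreover have "dep ar n \<chi>" unfolding \<chi>_def \<psi>_def
    by (rule dep_all, rule dep_disj, use f in \<open>auto simp: S_def\<close>)
  moreover have "\<chi> X s"
    unfolding \<chi>_def
  proof
    fix x assume x: "x \<in> univ X"
    hence "f x \<in> S" "f x X (s(n:=x))" using f unfolding S_def by auto
    thus "\<psi> X (s(n:=x))" unfolding \<psi>_def by blast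
  qed
  ultimately have "\<chi> Y t" by (rule R_mono[OF r])
  hence "\<psi> Y (t(n:=b))" unfolding \<chi>_def using b by auto
  then obtain \<phi> where "\<phi> \<in> S" "\<phi> Y (t(n:=b))" unfolding \<psi>_def by auto
  then obtain a where "a \<in> univ X" "f a Y (t(n:=b))" unfolding S_def by auto
  thus False using f by auto
qed

lemma R_eq:
  assumes r: "R n s t" and "i < n" "j < n"
  shows "s i = s j \<longleftrightarrow> t i = t j"
proof -
  have d1: "dep ar n (\<lambda>M s. s i = s j)" using assms unfolding dep_def by auto
  have d2: "dep ar n (\<lambda>M s. s i \<noteq> s j)" using assms unfolding dep_def by auto
  have "s i = s j \<Longrightarrow> t i = t j" using R_mono[OF r eqC d1] by simp
  moreover have "s i \<noteq> s j \<Longrightarrow> t i \<noteq> t j" using R_mono[OF r neqC d2] by simp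
  ultimately show ?thesis by blast
qed

lemma R_at:
  assumes r: "R n s t" and l: "length vs = ar i" and vs: "set vs \<subseteq> {..<n}"
    and p: "P X i (map s vs)"
  shows "P Y i (map t vs)"
proof -
  have "dep ar n (\<lambda>M s. P M i (map s vs))" unfolding dep_def
  proof (intro allI impI)
    fix M and s s' :: "nat \<Rightarrow> 'a"
    assume "is_struct ar M \<and> asg M s \<and> asg M s' \<and> (\<forall>k<n. s k = s' k)"
    hence "map s vs = map s' vs" using vs by (auto intro!: map_cong)
    thus "P M i (map s vs) = P M i (map s' vs)" by (rule arg_cong)
  qed
  from R_mono[OF r atC[OF l] this] p show ?thesis by simp
qed

definition enX where "enX = from_nat_into (univ X)"
definition enY where "enY = from_nat_into (univ Y)"

lemma neX: "univ X \<noteq> {}" using sX by (simp add: is_struct_def)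
lemma neY: "univ Y \<noteq> {}" using sY by (simp add: is_struct_def)

lemma enX_in: "enX m \<in> univ X" unfolding enX_def using neX by (rule from_nat_into)
lemma enY_in: "enY m \<in> univ Y" unfolding enY_def using neY by (rule from_nat_into)

primrec stp :: "nat \<Rightarrow> (nat \<Rightarrow> 'a) \<times> (nat \<Rightarrow> 'a)" where
  "stp 0 = (\<lambda>_. enX 0, \<lambda>_. enY 0)"
| "stp (Suc k) = (if even k then
      ((fst (stp k))(k := enX (k div 2)),
       (snd (stp k))(k := SOME b. b \<in> univ Y \<and> R (Suc k) ((fst (stp k))(k := enX (k div 2))) ((snd (stp k))(k := b))))
    else
      ((fst (stp k))(k := SOME a. a \<in> univ X \<and> R (Suc k) ((fst (stp k))(k := a)) ((snd (stp k))(k := enY (k div 2)))),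
       (snd (stp k))(k := enY (k div 2))))"

lemma stp_R: "R k (fst (stp k)) (snd (stp k))"
proof (induction k)
  case 0
  show ?case by (rule R0) (auto simp: asg_def enX_in enY_in)
next
  case (Suc k)
  show ?case
  proof (cases "even k")
    case True
    have "\<exists>b. b \<in> univ Y \<and> R (Suc k) ((fst (stp k))(k := enX (k div 2))) ((snd (stp k))(k := b))"
      using forth_step[OF Suc.IH enX_in] by blast
    from someI_ex[OF this] have
      "R (Suc k) ((fst (stp k))(k := enX (k div 2))) ((snd (stp k))(k := SOME b. b \<in> univ Y \<and> R (Suc k) ((fst (stp k))(k := enX (k div 2))) ((snd (stp k))(k := b))))"
      by (rule conjunct2)
    moreover have "stp (Suc k) = ((fst (stp k))(k := enX (k div 2)),
       (snd (stp k))(k := SOME b. b \<in> univ Y \<and> R (Suc k) ((fst (stp k))(k := enX (k div 2))) ((snd (stp k))(k := b))))"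
      using True by (simp only: stp.simps if_True)
    ultimately show ?thesis by (simp only: fst_conv snd_conv)
  next
    case False
    have "\<exists>a. a \<in> univ X \<and> R (Suc k) ((fst (stp k))(k := a)) ((snd (stp k))(k := enY (k div 2)))"
      using back_step[OF Suc.IH enY_in] by blast
    from someI_ex[OF this] have
      "R (Suc k) ((fst (stp k))(k := SOME a. a \<in> univ X \<and> R (Suc k) ((fst (stp k))(k := a)) ((snd (stp k))(k := enY (k div 2))))) ((snd (stp k))(k := enY (k div 2)))"
      by (rule conjunct2)
    moreover have "stp (Suc k) = ((fst (stp k))(k := SOME a. a \<in> univ X \<and> R (Suc k) ((fst (stp k))(k := a)) ((snd (stp k))(k := enY (k div 2)))),
       (snd (stp k))(k := enY (k div 2)))"
      using False by (simp only: stp.simps if_False)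
    ultimately show ?thesis by (simp only: fst_conv snd_conv)
  qed
qed

lemma stp_stable: "i < k \<Longrightarrow> fst (stp k) i = fst (stp (Suc i)) i \<and> snd (stp k) i = snd (stp (Suc i)) i"
proof (induction k)
  case 0 thus ?case by simp
next
  case (Suc k)
  show ?case
  proof (cases "i = k")
    case True thus ?thesis by simp
  next
    case False
    hence "i < k" using Suc.prems by simp
    with Suc.IH False show ?thesis by simp
  qed
qed

definition sF where "sF i = fst (stp (Suc i)) i"
definition tF where "tF i = snd (stp (Suc i)) i"

lemma stF: "i < k \<Longrightarrow> fst (stp k) i = sF i \<and> snd (stp k) i = tF i"
  using stp_stable sF_def tF_def by simp

lemma sF_ev: "sF (2*m) = enX m" unfolding sF_def by simp
lemma tF_od: "tF (Suc (2*m)) = enY m" unfolding tF_def by simp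

lemma sF_in: "sF i \<in> univ X"
  using stp_R[of "Suc i"] unfolding sF_def R_def asg_def by auto
lemma tF_in: "tF i \<in> univ Y"
  using stp_R[of "Suc i"] unfolding tF_def R_def asg_def by auto

lemma F_eq: "sF i = sF j \<longleftrightarrow> tF i = tF j"
proof -
  let ?k = "Suc (max i j)"
  have "fst (stp ?k) i = fst (stp ?k) j \<longleftrightarrow> snd (stp ?k) i = snd (stp ?k) j"
    by (rule R_eq[OF stp_R]) simp_all
  thus ?thesis using stF[of i ?k] stF[of j ?k] by simp
qed

lemma X_range: "x \<in> univ X \<Longrightarrow> \<exists>i. sF i = x"
  using from_nat_into_surj[OF cX] sF_ev unfolding enX_def by metis

lemma Y_range: "y \<in> univ Y \<Longrightarrow> \<exists>i. tF i = y"
  using from_nat_into_surj[OF cY] tF_od unfolding enY_def by metis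

definition F where "F x = tF (SOME i. sF i = x)"

lemma F_sF: "F (sF i) = tF i"
proof -
  have "sF (SOME j. sF j = sF i) = sF i" by (rule someI) simp
  thus ?thesis unfolding F_def using F_eq by blast
qed

lemma main: "bij_betw F (univ X) (univ Y) \<and>
   (\<forall>i xs. length xs = ar i \<and> set xs \<subseteq> univ X \<and> P X i xs \<longrightarrow> P Y i (map F xs))"
proof (intro conjI allI impI)
  show "bij_betw F (univ X) (univ Y)" unfolding bij_betw_def
  proof
    show "inj_on F (univ X)"
    proof (rule inj_onI)
      fix x y assume x: "x \<in> univ X" and y: "y \<in> univ X" and e: "F x = F y"
      obtain i where i: "sF i = x" using X_range[OF x] by blast
      obtain j where j: "sF j = y" using X_range[OF y] by blast
      have "tF i = tF j" using e F_sF[of i] F_sF[of j] i[symmetric] j[symmetric] by simp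
      hence "sF i = sF j" using F_eq by blast
      thus "x = y" using i j by simp
    qed
    show "F ` univ X = univ Y"
    proof
      show "F ` univ X \<subseteq> univ Y"
      proof
        fix y assume "y \<in> F ` univ X"
        then obtain x where x: "x \<in> univ X" and y: "y = F x" by blast
        obtain i where i: "sF i = x" using X_range[OF x] by blast
        have "y = tF i" using y i[symmetric] F_sF by simp
        thus "y \<in> univ Y" using tF_in by simp
      qed
      show "univ Y \<subseteq> F ` univ X"
      proof
        fix y assume "y \<in> univ Y"
        then obtain i where "tF i = y" using Y_range by blast
        hence "y = F (sF i)" using F_sF by simp
        thus "y \<in> F ` univ X" using sF_in by (rule image_eqI)
      qed
    qed
  qed
next
  fix i xs assume h: "length xs = ar i \<and> set xs \<subseteq> univ X \<and> P X i xs"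
  define idx where "idx = map (\<lambda>x. SOME j. sF j = x) xs"
  have mis: "map sF idx = xs" unfolding idx_def
  proof (rule map_idI')
    fix x assume "x \<in> set xs"
    hence "\<exists>j. sF j = x" using h X_range by blast
    hence "sF (SOME j. sF j = x) = x" by (rule someI_ex)
    thus "sF ((\<lambda>x. SOME j. sF j = x) x) = x" by simp
  qed
  define k where "k = Suc (Max (insert 0 (set idx)))"
  have lt: "\<And>j. j \<in> set idx \<Longrightarrow> j < k" unfolding k_def
    by (simp add: le_imp_less_Suc)
  have m1: "map (fst (stp k)) idx = map sF idx" using lt stF by (auto intro!: map_cong)
  have m2: "map (snd (stp k)) idx = map tF idx" using lt stF by (auto intro!: map_cong)
  have l': "length idx = ar i" using h unfolding idx_def by simp
  have v': "set idx \<subseteq> {..<k}" using lt by auto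
  have "P X i (map (fst (stp k)) idx)" using m1 mis h by simp
  from R_at[OF stp_R l' v' this] have "P Y i (map (snd (stp k)) idx)" .
  moreover have "map tF idx = map F xs"
  proof -
    have "map F xs = map F (map sF idx)" using mis by simp
    also have "\<dots> = map tF idx" by (simp add: F_sF)
    finally show ?thesis by simp
  qed
  ultimately show "P Y i (map F xs)" using m2 by simp
qed

end


lemma presP:
  assumes c: "condensation X Y F"
  shows "\<phi> \<in> Pinf ar \<Longrightarrow> \<forall>s. asg X s \<longrightarrow> \<phi> X s \<longrightarrow> \<phi> Y (F \<circ> s)"
proof (induction rule: Pinf.induct)
  case (P_eq a b) thus ?case by simp
next
  case (P_neq a b)
  have inj: "inj_on F (univ X)" using c by (simp add: condensation_def bij_betw_def)
  show ?case
  proof (intro allI impI)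
    fix s assume s: "asg X s" and ne: "s a \<noteq> s b"
    show "(F \<circ> s) a \<noteq> (F \<circ> s) b"
      using inj_on_eq_iff[OF inj asg_in[OF s] asg_in[OF s]] ne by simp
  qed
next
  case (P_rel vs i)
  have rr: "\<forall>i. \<forall>xs\<in>rels X i. map F xs \<in> rels Y i" using c by (simp add: condensation_def)
  show ?case
  proof (intro allI impI)
    fix s assume "map s vs \<in> rels X i"
    hence "map F (map s vs) \<in> rels Y i" using rr by blast
    thus "map (F \<circ> s) vs \<in> rels Y i" by simp
  qed
next
  case (P_all \<phi> v)
  show ?case
  proof (intro allI impI ballI)
    fix s y assume s: "asg X s" and h: "\<forall>x\<in>univ X. \<phi> X (s(v := x))" and y: "y \<in> univ Y"
    have "univ Y = F ` univ X" using c by (simp add: condensation_def bij_betw_def)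
    then obtain x where x: "x \<in> univ X" "y = F x" using y by blast
    have "(F \<circ> s)(v := y) = F \<circ> (s(v := x))" using x by auto
    thus "\<phi> Y ((F \<circ> s)(v := y))" using P_all.IH h x s asg_upd by metis
  qed
next
  case (P_ex \<phi> v)
  show ?case
  proof (intro allI impI)
    fix s assume s: "asg X s" and "\<exists>x\<in>univ X. \<phi> X (s(v := x))"
    then obtain x where x: "x \<in> univ X" "\<phi> X (s(v := x))" by blast
    have "univ Y = F ` univ X" using c by (simp add: condensation_def bij_betw_def)
    hence "F x \<in> univ Y" using x by blast
    moreover have "(F \<circ> s)(v := F x) = F \<circ> (s(v := x))" by auto
    ultimately show "\<exists>y\<in>univ Y. \<phi> Y ((F \<circ> s)(v := y))" using P_ex.IH x s asg_upd by metis
  qed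
next
  case (P_conj S) thus ?case by blast
next
  case (P_disj S) thus ?case by blast
qed

lemma satP:
  assumes c: "condensation X Y F" and p: "\<phi> \<in> Pinf ar" and sx: "sat X \<phi>"
  shows "sat Y \<phi>"
  unfolding sat_def
proof (intro allI impI)
  fix t assume t: "asg Y t"
  have b: "bij_betw F (univ X) (univ Y)" using c by (simp add: condensation_def)
  define s where "s = inv_into (univ X) F \<circ> t"
  have im: "t k \<in> F ` univ X" for k using asg_in[OF t] b by (simp add: bij_betw_def)
  have "asg X s" unfolding asg_def s_def using inv_into_into[OF im] by auto
  moreover have "F \<circ> s = t" unfolding s_def using f_inv_into_f[OF im] by auto
  ultimately show "\<phi> Y t" using presP[OF c p] sx unfolding sat_def by metis
qed

lemma presN:
  assumes c: "condensation Y X G"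
  shows "\<phi> \<in> Ninf ar \<Longrightarrow> \<forall>t. asg Y t \<longrightarrow> \<phi> X (G \<circ> t) \<longrightarrow> \<phi> Y t"
proof (induction rule: Ninf.induct)
  case (N_eq a b)
  have inj: "inj_on G (univ Y)" using c by (simp add: condensation_def bij_betw_def)
  show ?case
  proof (intro allI impI)
    fix t assume t: "asg Y t" and e: "(G \<circ> t) a = (G \<circ> t) b"
    show "t a = t b"
      using inj_on_eq_iff[OF inj asg_in[OF t] asg_in[OF t]] e by simp
  qed
next
  case (N_neq a b) thus ?case by auto
next
  case (N_nrel vs i)
  have rr: "\<forall>i. \<forall>xs\<in>rels Y i. map G xs \<in> rels X i" using c by (simp add: condensation_def)
  show ?case
  proof (intro allI impI)
    fix t assume nr: "map (G \<circ> t) vs \<notin> rels X i"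
    show "map t vs \<notin> rels Y i"
    proof
      assume "map t vs \<in> rels Y i"
      hence "map G (map t vs) \<in> rels X i" using rr by blast
      thus False using nr by simp
    qed
  qed
next
  case (N_all \<phi> v)
  show ?case
  proof (intro allI impI ballI)
    fix t y assume t: "asg Y t" and h: "\<forall>x\<in>univ X. \<phi> X ((G \<circ> t)(v := x))" and y: "y \<in> univ Y"
    have "univ X = G ` univ Y" using c by (simp add: condensation_def bij_betw_def)
    hence "G y \<in> univ X" using y by blast
    moreover have "(G \<circ> t)(v := G y) = G \<circ> (t(v := y))" by auto
    ultimately show "\<phi> Y (t(v := y))" using N_all.IH h y t asg_upd by metis
  qed
next
  case (N_ex \<phi> v)
  show ?case
  proof (intro allI impI)
    fix t assume t: "asg Y t" and "\<exists>x\<in>univ X. \<phi> X ((G \<circ> t)(v := x))"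
    then obtain x where x: "x \<in> univ X" "\<phi> X ((G \<circ> t)(v := x))" by blast
    have "univ X = G ` univ Y" using c by (simp add: condensation_def bij_betw_def)
    then obtain y where y: "y \<in> univ Y" "x = G y" using x by blast
    have "(G \<circ> t)(v := x) = G \<circ> (t(v := y))" using y by auto
    thus "\<exists>y\<in>univ Y. \<phi> Y (t(v := y))" using N_ex.IH x y t asg_upd by metis
  qed
next
  case (N_conj S) thus ?case by blast
next
  case (N_disj S) thus ?case by blast
qed

lemma satN:
  assumes c: "condensation Y X G" and p: "\<phi> \<in> Ninf ar" and sx: "sat X \<phi>"
  shows "sat Y \<phi>"
  unfolding sat_def
proof (intro allI impI)
  fix t assume t: "asg Y t"
  have b: "bij_betw G (univ Y) (univ X)" using c by (simp add: condensation_def)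
  have "asg X (G \<circ> t)" using t b unfolding asg_def by (auto simp: bij_betw_def)
  thus "\<phi> Y t" using presN[OF c p] sx t unfolding sat_def by metis
qed

lemma bfP:
  assumes "is_struct ar X" "is_struct ar Y" "countable (univ X)" "countable (univ Y)"
    and "\<And>\<phi>. \<phi> \<in> Pinf ar \<Longrightarrow> sentence ar \<phi> \<Longrightarrow> sat X \<phi> \<Longrightarrow> sat Y \<phi>"
  shows "\<exists>F. condensation X Y F"
proof -
  interpret bf ar "Pinf ar" "\<lambda>M i xs. xs \<in> rels M i" X Y
    by unfold_locales (auto intro: Pinf.intros assms)
  have "condensation X Y F"
    using main assms(1) unfolding condensation_def is_struct_def by blast
  thus ?thesis by blast
qed

lemma bfN:
  assumes "is_struct ar X" "is_struct ar Y" "countable (univ X)" "countable (univ Y)"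
    and "\<And>\<phi>. \<phi> \<in> Ninf ar \<Longrightarrow> sentence ar \<phi> \<Longrightarrow> sat X \<phi> \<Longrightarrow> sat Y \<phi>"
  shows "\<exists>G. condensation Y X G"
proof -
  interpret bf ar "Ninf ar" "\<lambda>M i xs. xs \<notin> rels M i" X Y
    by unfold_locales (auto intro: Ninf.intros assms)
  have b: "bij_betw F (univ X) (univ Y)" and
    r: "\<And>i xs. length xs = ar i \<Longrightarrow> set xs \<subseteq> univ X \<Longrightarrow> xs \<notin> rels X i \<Longrightarrow> map F xs \<notin> rels Y i"
    using main by auto
  define G where "G = inv_into (univ X) F"
  have "condensation Y X G" unfolding condensation_def
  proof
    show "bij_betw G (univ Y) (univ X)" unfolding G_def using b by (rule bij_betw_inv_into)
    show "\<forall>i. \<forall>ys\<in>rels Y i. map G ys \<in> rels X i"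
    proof (intro allI ballI)
      fix i ys assume ys: "ys \<in> rels Y i"
      hence l: "length ys = ar i" and st: "set ys \<subseteq> univ Y" using assms(2) unfolding is_struct_def by auto
      have im: "y \<in> F ` univ X" if "y \<in> set ys" for y using st b that by (auto simp: bij_betw_def)
      have "set (map G ys) \<subseteq> univ X" unfolding G_def using inv_into_into[OF im] by auto
      moreover have "map F (map G ys) = ys" unfolding G_def
        by (rule map_idI', rule f_inv_into_f[OF im])
      ultimately show "map G ys \<in> rels X i" using r[of "map G ys" i] l ys by auto
    qed
  qed
  thus ?thesis by blast
qed

lemma cond_countable:
  assumes "condensation Y X G" "countable (univ X)" shows "countable (univ Y)"
proof -
  have "bij_betw G (univ Y) (univ X)" using assms by (simp add: condensation_def)
  hence "bij_betw (inv_into (univ Y) G) (univ X) (univ Y)" by (rule bij_betw_inv_into)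
  thus ?thesis using assms(2) by (metis bij_betw_imp_surj_on countable_image)
qed

theorem theorem4p3:
  fixes ar :: "'i \<Rightarrow> nat" and X :: "('i, nat) lstruct"
  assumes "is_struct ar X" and "countable (univ X)"
  shows "(weakly_reversible ar X \<longleftrightarrow>
           (\<forall>Y :: ('i, nat) lstruct. is_struct ar Y \<and> countable (univ Y) \<and>
              equiv_in ar (Pinf ar) X Y \<longrightarrow> isomorphic ar Y X))
       \<and> (weakly_reversible ar X \<longleftrightarrow>
           (\<forall>Y :: ('i, nat) lstruct. is_struct ar Y \<and> countable (univ Y) \<and>
              (\<forall>\<phi> \<in> Th ar (Pinf ar \<union> Ninf ar) X. sat Y \<phi>) \<longrightarrow> isomorphic ar Y X))"
proof (intro conjI iffI allI impI)
  assume wr: "weakly_reversible ar X"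
  fix Y :: "('i, nat) lstruct"
  assume h: "is_struct ar Y \<and> countable (univ Y) \<and> equiv_in ar (Pinf ar) X Y"
  obtain F where "condensation X Y F"
    using bfP[of ar X Y] assms h unfolding equiv_in_def by blast
  moreover obtain G where "condensation Y X G"
    using bfP[of ar Y X] assms h unfolding equiv_in_def by blast
  ultimately have "cond_equiv Y X" unfolding cond_equiv_def by blast
  thus "isomorphic ar Y X" using wr h unfolding weakly_reversible_def by blast
next
  assume B: "\<forall>Y :: ('i, nat) lstruct. is_struct ar Y \<and> countable (univ Y) \<and>
              equiv_in ar (Pinf ar) X Y \<longrightarrow> isomorphic ar Y X"
  show "weakly_reversible ar X" unfolding weakly_reversible_def
  proof (intro allI impI)
    fix Y :: "('i, nat) lstruct" assume h: "is_struct ar Y \<and> cond_equiv Y X"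
    then obtain F G where F: "condensation Y X F" and G: "condensation X Y G"
      unfolding cond_equiv_def by blast
    have "countable (univ Y)" using cond_countable[OF F] assms by blast
    moreover have "equiv_in ar (Pinf ar) X Y" unfolding equiv_in_def
      using satP[OF F] satP[OF G] by blast
    ultimately show "isomorphic ar Y X" using B h by blast
  qed
next
  assume wr: "weakly_reversible ar X"
  fix Y :: "('i, nat) lstruct"
  assume h: "is_struct ar Y \<and> countable (univ Y) \<and> (\<forall>\<phi> \<in> Th ar (Pinf ar \<union> Ninf ar) X. sat Y \<phi>)"
  obtain F where "condensation X Y F"
    using bfP[of ar X Y] assms h unfolding Th_def by blast
  moreover obtain G where "condensation Y X G"
    using bfN[of ar X Y] assms h unfolding Th_def by blast
  ultimately have "cond_equiv Y X" unfolding cond_equiv_def by blast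
  thus "isomorphic ar Y X" using wr h unfolding weakly_reversible_def by blast
next
  assume B: "\<forall>Y :: ('i, nat) lstruct. is_struct ar Y \<and> countable (univ Y) \<and>
              (\<forall>\<phi> \<in> Th ar (Pinf ar \<union> Ninf ar) X. sat Y \<phi>) \<longrightarrow> isomorphic ar Y X"
  show "weakly_reversible ar X" unfolding weakly_reversible_def
  proof (intro allI impI)
    fix Y :: "('i, nat) lstruct" assume h: "is_struct ar Y \<and> cond_equiv Y X"
    then obtain F G where F: "condensation Y X F" and G: "condensation X Y G"
      unfolding cond_equiv_def by blast
    have "countable (univ Y)" using cond_countable[OF F] assms by blast
    moreover have "\<forall>\<phi> \<in> Th ar (Pinf ar \<union> Ninf ar) X. sat Y \<phi>" unfolding Th_def
      using satP[OF G] satN[OF F] by blast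
    ultimately show "isomorphic ar Y X" using B h by blast
  qed
qed

end
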